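(* Let $\lambda,\mu,\nu$ be partitions of the same integer with $\ell(\lambda)\le 4$ and $\ell(\mu),\ell(\nu)\le 2$. If $\nu_2<\lambda_3+\lambda_4$ or $\mu_2+\nu_2<\lambda_2+\lambda_3+2\lambda_4$, then the Kronecker coefficient $g_{\mu,\nu,\lambda}$ is zero. Equivalently, if $g_{\mu,\nu,\lambda}\ne0$ then $\lambda_2+\lambda_3+2\lambda_4\le\mu_2+\nu_2$ and $\lambda_3+\lambda_4\le\nu_2$.
   Context: Partitions are padded with zero parts. The Kronecker coefficient $g_{\mu,\nu,\lambda}$ is defined by $s_\lambda(x_1y_1,x_1y_2,x_2y_1,x_2y_2)=\sum_{\mu,\nu}g_{\mu,\nu,\lambda}\,s_\mu(x_1,x_2)s_\nu(y_1,y_2)$, with $s$ the Schur polynomials. *)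

theory Defs
  imports Complex_Main
begin

text \<open>Partitions are represented as lists of naturals, weakly decreasing,
  padded with zero parts to a fixed length (4 for lambda, 2 for mu and nu).\<close>

definition is_partition :: "nat list \<Rightarrow> bool" where
  "is_partition la \<longleftrightarrow> sorted (rev la)"

definition cells :: "nat list \<Rightarrow> (nat \<times> nat) set" where
  "cells la = {(i, j). i < length la \<and> j < la ! i}"

definition ssyt :: "nat list \<Rightarrow> nat \<Rightarrow> ((nat \<times> nat) \<Rightarrow> nat) set" where
  "ssyt la m = {T. (\<forall>c. c \<notin> cells la \<longrightarrow> T c = 0)
      \<and> (\<forall>c\<in>cells la. 1 \<le> T c \<and> T c \<le> m)
      \<and> (\<forall>i j. (i, Suc j) \<in> cells la \<longrightarrow> T (i, j) \<le> T (i, Suc j))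
      \<and> (\<forall>i j. (Suc i, j) \<in> cells la \<longrightarrow> T (i, j) < T (Suc i, j))}"

definition schur :: "nat list \<Rightarrow> nat \<Rightarrow> (nat \<Rightarrow> real) \<Rightarrow> real" where
  "schur la m z = (\<Sum>T\<in>ssyt la m. \<Prod>c\<in>cells la. z (T c))"

definition vars2 :: "real \<Rightarrow> real \<Rightarrow> nat \<Rightarrow> real" where
  "vars2 a b = (\<lambda>k. if k = 1 then a else b)"

definition vars4 :: "real \<Rightarrow> real \<Rightarrow> real \<Rightarrow> real \<Rightarrow> nat \<Rightarrow> real" where
  "vars4 a b c d = (\<lambda>k. if k = 1 then a else if k = 2 then b else if k = 3 then c else d)"

definition two_row_parts :: "nat \<Rightarrow> nat list set" where
  "two_row_parts n = {[a, b] | a b. b \<le> a \<and> a + b = n}"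

definition kron_expansion :: "nat list \<Rightarrow> (nat list \<Rightarrow> nat list \<Rightarrow> int) \<Rightarrow> bool" where
  "kron_expansion la c \<longleftrightarrow>
     (\<forall>x1 x2 y1 y2 :: real.
        schur la 4 (vars4 (x1*y1) (x1*y2) (x2*y1) (x2*y2)) =
        (\<Sum>mu\<in>two_row_parts (sum_list la). \<Sum>nu\<in>two_row_parts (sum_list la).
            of_int (c mu nu) * schur mu 2 (vars2 x1 x2) * schur nu 2 (vars2 y1 y2)))
     \<and> (\<forall>mu nu. mu \<notin> two_row_parts (sum_list la) \<or> nu \<notin> two_row_parts (sum_list la)
            \<longrightarrow> c mu nu = 0)"

definition kronecker :: "nat list \<Rightarrow> nat list \<Rightarrow> nat list \<Rightarrow> int" where
  "kronecker mu nu la = (THE c. kron_expansion la c) mu nu"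

end

theory Submission
  imports Defs
begin


definition part :: "nat list \<Rightarrow> bool" where
  "part la \<longleftrightarrow> (\<forall>i. Suc i < length la \<longrightarrow> la ! Suc i \<le> la ! i)"

lemma cells_iff: "(i,j) \<in> cells la \<longleftrightarrow> i < length la \<and> j < la ! i"
  by (simp add: cells_def)

lemma cells_Sigma: "cells la = Sigma {..<length la} (\<lambda>i. {..<la ! i})"
  by (auto simp: cells_def)

lemma finite_cells: "finite (cells la)"
  by (simp add: cells_Sigma)

lemma ssyt_out: "T \<in> ssyt la m \<Longrightarrow> (i,j) \<notin> cells la \<Longrightarrow> T (i,j) = 0"
  unfolding ssyt_def by blast
lemma ssyt_rng: "T \<in> ssyt la m \<Longrightarrow> (i,j) \<in> cells la \<Longrightarrow> 1 \<le> T (i,j) \<and> T (i,j) \<le> m"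
  unfolding ssyt_def by blast
lemma ssyt_row: "T \<in> ssyt la m \<Longrightarrow> (i,Suc j) \<in> cells la \<Longrightarrow> T (i,j) \<le> T (i,Suc j)"
  unfolding ssyt_def by blast
lemma ssyt_col: "T \<in> ssyt la m \<Longrightarrow> (Suc i,j) \<in> cells la \<Longrightarrow> T (i,j) < T (Suc i,j)"
  unfolding ssyt_def by blast
lemma ssyt_nz: "T \<in> ssyt la m \<Longrightarrow> T (i,j) \<noteq> 0 \<Longrightarrow> (i,j) \<in> cells la"
  using ssyt_out by metis

lemma ssyt_row_mono:
  assumes "T \<in> ssyt la m" "(i,j') \<in> cells la" "j \<le> j'"
  shows "T (i,j) \<le> T (i,j')"
  using assms(2,3)
proof (induction j')
  case 0 then show ?case by simp
next
  case (Suc j')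
  show ?case
  proof (cases "j = Suc j'")
    case True then show ?thesis by simp
  next
    case False
    then have "j \<le> j'" using Suc by simp
    moreover have "(i,j') \<in> cells la" using Suc.prems by (simp add: cells_def)
    ultimately have "T (i,j) \<le> T (i,j')" using Suc.IH by simp
    also have "\<dots> \<le> T (i,Suc j')" using ssyt_row[OF assms(1) Suc.prems(1)] .
    finally show ?thesis .
  qed
qed

lemma part_above: "part la \<Longrightarrow> (Suc i,j) \<in> cells la \<Longrightarrow> (i,j) \<in> cells la"
  unfolding part_def cells_def by fastforce

lemma cells_left: "(i,j) \<in> cells la \<Longrightarrow> j' \<le> j \<Longrightarrow> (i,j') \<in> cells la"
  unfolding cells_def by auto

definition rank :: "nat set \<Rightarrow> nat \<Rightarrow> nat" where
  "rank F j = card {j'\<in>F. j' < j}"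

lemma rank_mono:
  assumes "finite F" "j1 \<in> F" "j1 < j2"
  shows "rank F j1 < rank F j2"
proof -
  have "{j'\<in>F. j' < j1} \<subset> {j'\<in>F. j' < j2}" using assms by auto
  moreover have "finite {j'\<in>F. j' < j2}" using assms by simp
  ultimately show ?thesis unfolding rank_def by (simp add: psubset_card_mono)
qed

lemma rank_lt:
  assumes "finite F" "j \<in> F"
  shows "rank F j < card F"
proof -
  have "{j'\<in>F. j' < j} \<subset> F" using assms by auto
  then show ?thesis unfolding rank_def using assms by (simp add: psubset_card_mono)
qed

lemma rank_inj: "finite F \<Longrightarrow> inj_on (rank F) F"
  unfolding inj_on_def
  by (metis less_irrefl linorder_neqE_nat rank_mono)

lemma rank_image: "finite F \<Longrightarrow> rank F ` F = {..<card F}"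
proof -
  assume f: "finite F"
  have "rank F ` F \<subseteq> {..<card F}" using rank_lt[OF f] by auto
  moreover have "card (rank F ` F) = card {..<card F}"
    using card_image[OF rank_inj[OF f]] by simp
  ultimately show ?thesis by (simp add: card_subset_eq)
qed

lemma rank_count:
  assumes "finite F"
  shows "card {j\<in>F. rank F j < b} = min b (card F)"
proof -
  have "rank F ` {j\<in>F. rank F j < b} = {r\<in>rank F ` F. r < b}" by auto
  also have "\<dots> = {r. r < card F \<and> r < b}" using rank_image[OF assms] by auto
  also have "\<dots> = {..<min b (card F)}" by auto
  finally have e: "rank F ` {j\<in>F. rank F j < b} = {..<min b (card F)}" .
  have "inj_on (rank F) {j\<in>F. rank F j < b}"
    using rank_inj[OF assms] by (rule inj_on_subset) auto
  then have "card {j\<in>F. rank F j < b} = card (rank F ` {j\<in>F. rank F j < b})"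
    by (simp add: card_image)
  then show ?thesis using e by simp
qed

lemma rank_downset:
  assumes "finite F" "K \<subseteq> F" "\<And>j j'. j \<in> K \<Longrightarrow> j' \<in> F \<Longrightarrow> j' < j \<Longrightarrow> j' \<in> K" "j \<in> F"
  shows "j \<in> K \<longleftrightarrow> rank F j < card K"
proof
  assume jK: "j \<in> K"
  have "{j'\<in>F. j' < j} \<subset> K" using assms jK by auto
  then show "rank F j < card K" unfolding rank_def
    using assms by (meson finite_subset psubset_card_mono)
next
  assume r: "rank F j < card K"
  show "j \<in> K"
  proof (rule ccontr)
    assume nj: "j \<notin> K"
    have "K \<subseteq> {j'\<in>F. j' < j}"
    proof
      fix x assume x: "x \<in> K"
      have "x < j"
      proof (rule ccontr)
        assume "\<not> x < j"
        then have "j < x" using nj x by (cases "x = j") auto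
        then show False using assms(3)[OF x assms(4)] nj by blast
      qed
      then show "x \<in> {j'\<in>F. j' < j}" using x assms(2) by auto
    qed
    then have "card K \<le> rank F j" unfolding rank_def using assms(1) by (simp add: card_mono)
    then show False using r by simp
  qed
qed


definition fr :: "(nat\<times>nat \<Rightarrow> nat) \<Rightarrow> nat \<Rightarrow> nat \<Rightarrow> nat \<Rightarrow> bool" where
  "fr T k i j \<longleftrightarrow> (T (i,j) = k \<and> T (Suc i,j) \<noteq> Suc k) \<or> (T (i,j) = Suc k \<and> \<not> (0 < i \<and> T (i - 1,j) = k))"

definition nbk :: "(nat\<times>nat \<Rightarrow> nat) \<Rightarrow> nat \<Rightarrow> nat \<Rightarrow> nat" where
  "nbk T k i = card {j. fr T k i j \<and> T (i,j) = Suc k}"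

definition bk :: "nat \<Rightarrow> (nat\<times>nat \<Rightarrow> nat) \<Rightarrow> (nat\<times>nat \<Rightarrow> nat)" where
  "bk k T = (\<lambda>(i,j). if fr T k i j then (if rank {j. fr T k i j} j < nbk T k i then k else Suc k) else T (i,j))"

definition cnt :: "nat list \<Rightarrow> (nat\<times>nat \<Rightarrow> nat) \<Rightarrow> nat \<Rightarrow> nat" where
  "cnt la T v = card {c\<in>cells la. T c = v}"

locale bkctx =
  fixes la :: "nat list" and m k :: nat and T :: "nat\<times>nat \<Rightarrow> nat"
  assumes part: "part la" and T: "T \<in> ssyt la m" and k1: "1 \<le> k" and km: "Suc k \<le> m"
begin

abbreviation "F i \<equiv> {j. fr T k i j}"

lemma bk_eq: "bk k S (i,j) = (if fr S k i j then (if rank {j. fr S k i j} j < nbk S k i then k else Suc k) else S (i,j))"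
  by (simp add: bk_def)

lemma fr_val: "fr T k i j \<Longrightarrow> T (i,j) = k \<or> T (i,j) = Suc k"
  unfolding fr_def by auto

lemma fr_cell: "fr T k i j \<Longrightarrow> (i,j) \<in> cells la"
  using fr_val ssyt_nz[OF T] k1 by fastforce

lemma finF: "finite (F i)"
proof -
  have "F i \<subseteq> {..<la ! i}" using fr_cell by (auto simp: cells_def)
  then show ?thesis by (rule finite_subset) simp
qed

lemma fr_below: "fr T k i j \<Longrightarrow> T (Suc i,j) \<noteq> k \<and> T (Suc i,j) \<noteq> Suc k"
proof -
  assume f: "fr T k i j"
  show ?thesis
  proof (cases "(Suc i,j) \<in> cells la")
    case True
    have "T (i,j) < T (Suc i,j)" using ssyt_col[OF T True] .
    then show ?thesis using f unfolding fr_def by auto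
  next
    case False
    then show ?thesis using ssyt_out[OF T False] k1 by simp
  qed
qed

lemma fr_above: "fr T k i j \<Longrightarrow> 0 < i \<Longrightarrow> T (i - 1,j) < k"
proof -
  assume f: "fr T k i j" and i: "0 < i"
  have c: "(Suc (i - 1), j) \<in> cells la" using fr_cell[OF f] i by simp
  have "T (i - 1,j) < T (Suc (i - 1),j)" using ssyt_col[OF T c] .
  then show ?thesis using f i unfolding fr_def by auto
qed

lemma no_fr_both: "fr T k i j \<Longrightarrow> \<not> fr T k (Suc i) j"
  using fr_below fr_val by blast

lemma L_left:
  assumes f2: "fr T k i j2" and lt: "j1 < j2" and nf: "\<not> fr T k i j1"
  shows "T (i,j1) \<le> k"
proof -
  have c2: "(i,j2) \<in> cells la" using fr_cell[OF f2] .
  have "T (i,j1) \<le> T (i,j2)" using ssyt_row_mono[OF T c2] lt by simp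
  moreover have "T (i,j2) \<le> Suc k" using fr_val[OF f2] by auto
  ultimately have le: "T (i,j1) \<le> Suc k" by simp
  show ?thesis
  proof (rule ccontr)
    assume "\<not> T (i,j1) \<le> k"
    then have e: "T (i,j1) = Suc k" using le by simp
    then have i: "0 < i" and a: "T (i - 1, j1) = k" using nf unfolding fr_def by auto
    have e2: "T (i,j2) = Suc k" using e \<open>T (i,j1) \<le> T (i,j2)\<close> \<open>T (i,j2) \<le> Suc k\<close> by simp
    have c2': "(Suc (i - 1), j2) \<in> cells la" using c2 i by simp
    have ca: "(i - 1, j2) \<in> cells la" using part_above[OF part c2'] .
    have "T (i - 1, j1) \<le> T (i - 1, j2)" using ssyt_row_mono[OF T ca] lt by simp
    moreover have "T (i - 1, j2) < T (Suc (i - 1), j2)" using ssyt_col[OF T c2'] .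
    ultimately have "T (i - 1, j2) = k" using a e2 i by simp
    then show False using f2 e2 i unfolding fr_def by auto
  qed
qed

lemma L_right:
  assumes f2: "fr T k i j2" and lt: "j2 < j1" and c1: "(i,j1) \<in> cells la" and nf: "\<not> fr T k i j1"
  shows "Suc k \<le> T (i,j1)"
proof -
  have "T (i,j2) \<le> T (i,j1)" using ssyt_row_mono[OF T c1] lt by simp
  moreover have "k \<le> T (i,j2)" using fr_val[OF f2] by auto
  ultimately have ge: "k \<le> T (i,j1)" by simp
  show ?thesis
  proof (rule ccontr)
    assume "\<not> Suc k \<le> T (i,j1)"
    then have e: "T (i,j1) = k" using ge by simp
    then have b: "T (Suc i, j1) = Suc k" using nf unfolding fr_def by auto
    have cb: "(Suc i, j1) \<in> cells la" using ssyt_nz[OF T] b by simp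
    have cb2: "(Suc i, j2) \<in> cells la" using cells_left[OF cb] lt by simp
    have e2: "T (i,j2) = k" using e \<open>T (i,j2) \<le> T (i,j1)\<close> \<open>k \<le> T (i,j2)\<close> by simp
    have "T (Suc i, j2) \<le> T (Suc i, j1)" using ssyt_row_mono[OF T cb] lt by simp
    moreover have "T (i, j2) < T (Suc i, j2)" using ssyt_col[OF T cb2] .
    ultimately have "T (Suc i, j2) = Suc k" using b e2 by simp
    then show False using f2 e2 unfolding fr_def by auto
  qed
qed

lemma fr_order: "fr T k i j1 \<Longrightarrow> fr T k i j2 \<Longrightarrow> j1 < j2 \<Longrightarrow> T (i,j1) = Suc k \<Longrightarrow> T (i,j2) = Suc k"
  using ssyt_row_mono[OF T fr_cell, of i j2 j1] fr_val[of i j2] by fastforce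

abbreviation "T' \<equiv> bk k T"

lemma T'_eq: "T' (i,j) = (if fr T k i j then (if rank (F i) j < nbk T k i then k else Suc k) else T (i,j))"
  unfolding bk_def by simp

lemma T'_ssyt: "T' \<in> ssyt la m"
  unfolding ssyt_def
proof (intro CollectI conjI allI impI ballI)
  fix c assume "c \<notin> cells la"
  then show "T' c = 0" using fr_cell ssyt_out[OF T] by (cases c) (auto simp: T'_eq)
next
  fix c assume c: "c \<in> cells la"
  show "1 \<le> T' c" using ssyt_rng[OF T] c k1 by (cases c) (auto simp: T'_eq)
  show "T' c \<le> m" using ssyt_rng[OF T] c km by (cases c) (auto simp: T'_eq)
next
  fix i j assume c: "(i, Suc j) \<in> cells la"
  show "T' (i,j) \<le> T' (i, Suc j)"
  proof (cases "fr T k i j")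
    case fj: True
    show ?thesis
    proof (cases "fr T k i (Suc j)")
      case True
      have "rank (F i) j < rank (F i) (Suc j)" using rank_mono[OF finF] fj by simp
      then show ?thesis using fj True by (auto simp: T'_eq)
    next
      case False
      have "Suc k \<le> T (i, Suc j)" using L_right[OF fj _ c False] by simp
      then show ?thesis using fj False by (auto simp: T'_eq)
    qed
  next
    case nfj: False
    show ?thesis
    proof (cases "fr T k i (Suc j)")
      case True
      have "T (i,j) \<le> k" using L_left[OF True _ nfj] by simp
      then show ?thesis using nfj True by (auto simp: T'_eq)
    next
      case False
      then show ?thesis using nfj ssyt_row[OF T c] by (auto simp: T'_eq)
    qed
  qed
next
  fix i j assume c: "(Suc i, j) \<in> cells la"
  show "T' (i,j) < T' (Suc i, j)"
  proof (cases "fr T k i j")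
    case fj: True
    have nf: "\<not> fr T k (Suc i) j" using no_fr_both[OF fj] .
    have "T (i,j) < T (Suc i,j)" using ssyt_col[OF T c] .
    then have "Suc k < T (Suc i, j)" using fr_below[OF fj] fr_val[OF fj] by auto
    then show ?thesis using fj nf by (auto simp: T'_eq)
  next
    case nfj: False
    show ?thesis
    proof (cases "fr T k (Suc i) j")
      case True
      have "T (i,j) < k" using fr_above[OF True] by simp
      then show ?thesis using nfj True by (auto simp: T'_eq)
    next
      case False
      then show ?thesis using nfj ssyt_col[OF T c] by (auto simp: T'_eq)
    qed
  qed
qed

lemma fr_T': "fr T' k i j \<longleftrightarrow> fr T k i j"
proof (cases "fr T k i j")
  case f: True
  have a: "\<not> fr T k (Suc i) j" using no_fr_both[OF f] .
  have b: "T' (Suc i, j) = T (Suc i, j)" using a by (simp add: T'_eq)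
  have c: "0 < i \<Longrightarrow> T' (i - 1, j) = T (i - 1, j)"
  proof -
    assume i: "0 < i"
    have "\<not> fr T k (i - 1) j" using no_fr_both[of "i - 1" j] f i by auto
    then show ?thesis by (simp add: T'_eq)
  qed
  have v: "T' (i,j) = k \<or> T' (i,j) = Suc k" using f by (simp add: T'_eq)
  have "fr T' k i j"
    using fr_below[OF f] fr_above[OF f] b c v unfolding fr_def[of T'] by auto
  then show ?thesis using f by simp
next
  case nf: False
  have "\<not> fr T' k i j"
  proof (cases "T (i,j) = k")
    case True
    then have b: "T (Suc i, j) = Suc k" using nf unfolding fr_def by auto
    have "\<not> fr T k (Suc i) j" using b True unfolding fr_def by auto
    then have "T' (Suc i, j) = Suc k" using b by (simp add: T'_eq)
    then show ?thesis using nf True unfolding fr_def[of T'] by (auto simp: T'_eq)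
  next
    case False
    show ?thesis
    proof (cases "T (i,j) = Suc k")
      case True
      then have i: "0 < i" and a: "T (i - 1, j) = k" using nf unfolding fr_def by auto
      have "\<not> fr T k (i - 1) j" using a True i unfolding fr_def by auto
      then have "T' (i - 1, j) = k" using a by (simp add: T'_eq)
      then show ?thesis using nf True i unfolding fr_def[of T'] by (auto simp: T'_eq)
    next
      case False2: False
      then show ?thesis using nf False unfolding fr_def[of T'] by (auto simp: T'_eq)
    qed
  qed
  then show ?thesis using nf by simp
qed

lemma F_T': "{j. fr T' k i j} = F i"
  using fr_T' by auto

lemma nbk_le: "nbk T k i \<le> card (F i)"
  unfolding nbk_def by (rule card_mono[OF finF]) auto

lemma nbk_T': "nbk T' k i = card {j. fr T k i j \<and> T (i,j) = k}"
proof -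
  let ?S = "{j\<in>F i. rank (F i) j < nbk T k i}"
  have eq: "{j. fr T' k i j \<and> T' (i,j) = Suc k} = F i - ?S"
    using fr_T' by (auto simp: T'_eq)
  have fs: "finite ?S" using finF by simp
  have "nbk T' k i = card (F i - ?S)" by (simp only: nbk_def[of T'] eq)
  also have "\<dots> = card (F i) - card ?S" using fs by (subst card_Diff_subset) auto
  finally have "nbk T' k i = card (F i) - card ?S" .
  also have "\<dots> = card (F i) - nbk T k i" using rank_count[OF finF] nbk_le by simp
  also have "\<dots> = card {j. fr T k i j \<and> T (i,j) = k}"
  proof -
    have "F i = {j. fr T k i j \<and> T (i,j) = k} \<union> {j. fr T k i j \<and> T (i,j) = Suc k}"
      using fr_val by auto
    moreover have "{j. fr T k i j \<and> T (i,j) = k} \<inter> {j. fr T k i j \<and> T (i,j) = Suc k} = {}" by auto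
    ultimately have "card (F i) = card {j. fr T k i j \<and> T (i,j) = k} + nbk T k i"
      unfolding nbk_def using finF by (metis (no_types, lifting) card_Un_disjoint finite_Un)
    then show ?thesis by simp
  qed
  finally show ?thesis .
qed

lemma bk_bk: "bk k T' = T"
proof (rule ext, clarify)
  fix i j
  show "bk k T' (i,j) = T (i,j)"
  proof (cases "fr T k i j")
    case False
    then show ?thesis using fr_T' by (simp only: bk_eq[of T'] fr_T') (simp add: T'_eq)
  next
    case f: True
    let ?K = "{j. fr T k i j \<and> T (i,j) = k}"
    have "j \<in> ?K \<longleftrightarrow> rank (F i) j < card ?K"
    proof (rule rank_downset[OF finF])
      show "?K \<subseteq> F i" by auto
      show "j \<in> F i" using f by simp
      fix a b assume a: "a \<in> ?K" and b: "b \<in> F i" "b < a"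
      show "b \<in> ?K"
      proof (rule ccontr)
        assume "b \<notin> ?K"
        then have "T (i,b) = Suc k" using b fr_val by auto
        then have "T (i,a) = Suc k" using fr_order[of i b a] a b by auto
        then show False using a by simp
      qed
    qed
    then show ?thesis using f fr_val[OF f] by (simp only: bk_eq[of T'] F_T' nbk_T' fr_T') auto
  qed
qed


lemma row_card:
  assumes "\<And>i j. P i j \<Longrightarrow> (i,j) \<in> cells la"
  shows "card {(i,j). P i j} = (\<Sum>i<length la. card {j. P i j})"
proof -
  have e: "{(i,j). P i j} = Sigma {..<length la} (\<lambda>i. {j. P i j})"
    using assms by (auto simp: cells_def)
  have "\<And>i. finite {j. P i j}"
  proof -
    fix i
    have "{j. P i j} \<subseteq> {..<la ! i}" using assms by (auto simp: cells_def)
    then show "finite {j. P i j}" by (rule finite_subset) simp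
  qed
  then show ?thesis unfolding e by (simp add: card_SigmaI)
qed

lemma T'_k: "T' (i,j) = k \<longleftrightarrow> (fr T k i j \<and> rank (F i) j < nbk T k i) \<or> (\<not> fr T k i j \<and> T (i,j) = k)"
  by (simp add: T'_eq)

lemma T'_v: "v \<noteq> k \<Longrightarrow> v \<noteq> Suc k \<Longrightarrow> T' (i,j) = v \<longleftrightarrow> T (i,j) = v"
  using fr_val[of i j] by (auto simp: T'_eq)

lemma cnt_other: "v \<noteq> k \<Longrightarrow> v \<noteq> Suc k \<Longrightarrow> cnt la T' v = cnt la T v"
proof -
  assume a: "v \<noteq> k" "v \<noteq> Suc k"
  have "{c\<in>cells la. T' c = v} = {c\<in>cells la. T c = v}"
    using a T'_v by auto
  then show ?thesis by (simp add: cnt_def)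
qed

lemma cnt_k: "cnt la T' k = cnt la T (Suc k)"
proof -
  define PL where "PL = {(i,j). (i,j) \<in> cells la \<and> \<not> fr T k i j \<and> T (i,j) = k}"
  define PH where "PH = {(i,j). (i,j) \<in> cells la \<and> \<not> fr T k i j \<and> T (i,j) = Suc k}"
  define FK where "FK = {(i,j). fr T k i j \<and> rank (F i) j < nbk T k i}"
  define FH where "FH = {(i,j). fr T k i j \<and> T (i,j) = Suc k}"
  have fc: "finite (cells la)" by (rule finite_cells)
  have s1: "{c\<in>cells la. T' c = k} = PL \<union> FK"
  proof -
    have "c \<in> cells la \<and> T' c = k \<longleftrightarrow> c \<in> PL \<union> FK" for c
    proof -
      obtain i j where c: "c = (i,j)" by force
      show ?thesis unfolding c PL_def FK_def using T'_k[of i j] fr_cell[of i j] by blast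
    qed
    then show ?thesis by blast
  qed
  have s2: "{c\<in>cells la. T c = Suc k} = PH \<union> FH"
    unfolding PH_def FH_def using fr_cell fr_val by auto
  have fPL: "finite PL" unfolding PL_def by (rule finite_subset[OF _ fc]) auto
  have fPH: "finite PH" unfolding PH_def by (rule finite_subset[OF _ fc]) auto
  have fFK: "finite FK" unfolding FK_def by (rule finite_subset[OF _ fc]) (auto intro: fr_cell)
  have fFH: "finite FH" unfolding FH_def by (rule finite_subset[OF _ fc]) (auto intro: fr_cell)
  have d1: "PL \<inter> FK = {}" unfolding PL_def FK_def by auto
  have d2: "PH \<inter> FH = {}" unfolding PH_def FH_def by auto
  have "card FK = (\<Sum>i<length la. card {j. fr T k i j \<and> rank (F i) j < nbk T k i})"
    unfolding FK_def by (rule row_card) (auto intro: fr_cell)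
  also have "\<dots> = (\<Sum>i<length la. nbk T k i)"
  proof (rule sum.cong[OF refl])
    fix i
    have "card {j. fr T k i j \<and> rank (F i) j < nbk T k i} = card {j\<in>F i. rank (F i) j < nbk T k i}"
      by simp
    also have "\<dots> = nbk T k i" using rank_count[OF finF] nbk_le by simp
    finally show "card {j. fr T k i j \<and> rank (F i) j < nbk T k i} = nbk T k i" .
  qed
  also have "\<dots> = card FH"
    unfolding FH_def nbk_def by (rule row_card[symmetric]) (auto intro: fr_cell)
  finally have cF: "card FK = card FH" .
  have "(\<lambda>(i,j). (Suc i, j)) ` PL = PH"
  proof
    show "(\<lambda>(i,j). (Suc i, j)) ` PL \<subseteq> PH"
    proof clarify
      fix i j assume "(i,j) \<in> PL"
      then have a: "T (i,j) = k" "\<not> fr T k i j" by (auto simp: PL_def)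
      then have b: "T (Suc i, j) = Suc k" unfolding fr_def by auto
      then have "(Suc i, j) \<in> cells la" using ssyt_nz[OF T] by simp
      moreover have "\<not> fr T k (Suc i) j" using a b unfolding fr_def by auto
      ultimately show "(Suc i, j) \<in> PH" using b by (simp add: PH_def)
    qed
  next
    show "PH \<subseteq> (\<lambda>(i,j). (Suc i, j)) ` PL"
    proof clarify
      fix i j assume "(i,j) \<in> PH"
      then have a: "T (i,j) = Suc k" "\<not> fr T k i j" by (auto simp: PH_def)
      then have i: "0 < i" and b: "T (i - 1, j) = k" unfolding fr_def by auto
      then have "(i - 1, j) \<in> cells la" using ssyt_nz[OF T] k1 by simp
      moreover have "\<not> fr T k (i - 1) j" using a b i unfolding fr_def by auto
      ultimately have "(i - 1, j) \<in> PL" using b by (simp add: PL_def)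
      moreover have "(i,j) = (\<lambda>(i,j). (Suc i, j)) (i - 1, j)" using i by simp
      ultimately show "(i,j) \<in> (\<lambda>(i,j). (Suc i, j)) ` PL" by blast
    qed
  qed
  moreover have "inj_on (\<lambda>(i,j). (Suc i, j)) PL" by (auto simp: inj_on_def)
  ultimately have cP: "card PL = card PH" by (metis card_image)
  show ?thesis unfolding cnt_def s1 s2
    using card_Un_disjoint[OF fPL fFK d1] card_Un_disjoint[OF fPH fFH d2] cP cF by simp
qed

end

definition sw :: "nat \<Rightarrow> nat \<Rightarrow> nat" where
  "sw k v = (if v = k then Suc k else if v = Suc k then k else v)"

lemma bk_props:
  assumes "part la" "T \<in> ssyt la m" "1 \<le> k" "Suc k \<le> m"
  shows "bk k T \<in> ssyt la m" "bk k (bk k T) = T" "cnt la (bk k T) v = cnt la T (sw k v)"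
proof -
  interpret A: bkctx la m k T using assms by unfold_locales
  show "bk k T \<in> ssyt la m" by (rule A.T'_ssyt)
  show "bk k (bk k T) = T" by (rule A.bk_bk)
  interpret B: bkctx la m k "bk k T" using assms A.T'_ssyt by unfold_locales
  show "cnt la (bk k T) v = cnt la T (sw k v)"
  proof -
    consider "v = k" | "v = Suc k" | "v \<noteq> k \<and> v \<noteq> Suc k" by blast
    then show ?thesis
    proof cases
      case 1 then show ?thesis using A.cnt_k by (simp add: sw_def)
    next
      case 2 then show ?thesis using B.cnt_k A.bk_bk by (simp add: sw_def)
    next
      case 3 then show ?thesis using A.cnt_other by (simp add: sw_def)
    qed
  qed
qed


lemma finite_ssyt: "finite (ssyt la m)"
proof (rule finite_subset)
  show "ssyt la m \<subseteq> {f. \<forall>x. (x \<in> cells la \<longrightarrow> f x \<in> {..m}) \<and> (x \<notin> cells la \<longrightarrow> f x = 0)}"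
    unfolding ssyt_def by auto
  show "finite {f. \<forall>x. (x \<in> cells la \<longrightarrow> f x \<in> {..m}) \<and> (x \<notin> cells la \<longrightarrow> f x = (0::nat))}"
    by (rule finite_set_of_finite_funs) (simp_all add: finite_cells)
qed

lemma is_partition_part: "is_partition la \<Longrightarrow> part la"
  unfolding is_partition_def part_def using sorted_rev_nth_mono by (metis le_SucI order_refl)

lemma card_cells: "card (cells la) = sum_list la"
  by (simp add: cells_Sigma card_SigmaI sum_list_sum_nth atLeast0LessThan)

lemma cnt_total:
  assumes "T \<in> ssyt la 4"
  shows "cnt la T 1 + cnt la T 2 + cnt la T 3 + cnt la T 4 = sum_list la"
proof -
  let ?A = "cells la"
  let ?S = "\<lambda>v. {c\<in>?A. T c = v}"
  have fin: "finite (?S v)" for v by (rule finite_subset[OF _ finite_cells]) auto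
  have e: "?A = ?S 1 \<union> (?S 2 \<union> (?S 3 \<union> ?S 4))"
  proof -
    have "c \<in> ?A \<Longrightarrow> T c \<in> {1,2,3,4}" for c
      using ssyt_rng[OF assms, of "fst c" "snd c"] by auto
    then show ?thesis by auto
  qed
  have "card ?A = card (?S 1) + (card (?S 2) + (card (?S 3) + card (?S 4)))"
    by (subst e, subst card_Un_disjoint, (auto simp: fin)[3],
        subst card_Un_disjoint, (auto simp: fin)[3], subst card_Un_disjoint, (auto simp: fin)[3], rule refl)
  then show ?thesis using card_cells[of la] by (simp add: cnt_def)
qed

definition bT :: "nat list \<Rightarrow> (nat\<times>nat \<Rightarrow> nat) \<Rightarrow> nat" where
  "bT la T = cnt la T 3 + cnt la T 4"
definition dT :: "nat list \<Rightarrow> (nat\<times>nat \<Rightarrow> nat) \<Rightarrow> nat" where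
  "dT la T = cnt la T 2 + cnt la T 4"
definition NN :: "nat list \<Rightarrow> nat \<Rightarrow> nat \<Rightarrow> nat" where
  "NN la j k = card {T\<in>ssyt la 4. bT la T = j \<and> dT la T = k}"

lemma card_le_map:
  assumes "finite S" "f ` S \<subseteq> S" "inj_on f S" "\<And>T. T \<in> S \<Longrightarrow> P T \<Longrightarrow> Q (f T)"
  shows "card {T\<in>S. P T} \<le> card {T\<in>S. Q T}"
proof (rule card_inj_on_le[of f])
  show "inj_on f {T\<in>S. P T}" using assms(3) by (rule inj_on_subset) auto
  show "f ` {T\<in>S. P T} \<subseteq> {T\<in>S. Q T}" using assms(2,4) by auto
  show "finite {T\<in>S. Q T}" using assms(1) by simp
qed

context
  fixes la :: "nat list"
  assumes pl: "part la"
begin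

lemma bk_in: "T \<in> ssyt la 4 \<Longrightarrow> 1 \<le> k \<Longrightarrow> k \<le> 3 \<Longrightarrow> bk k T \<in> ssyt la 4"
  using bk_props(1)[OF pl] by simp
lemma bk_inv: "T \<in> ssyt la 4 \<Longrightarrow> 1 \<le> k \<Longrightarrow> k \<le> 3 \<Longrightarrow> bk k (bk k T) = T"
  using bk_props(2)[OF pl] by simp
lemma bk_cnt: "T \<in> ssyt la 4 \<Longrightarrow> 1 \<le> k \<Longrightarrow> k \<le> 3 \<Longrightarrow> cnt la (bk k T) v = cnt la T (sw k v)"
  using bk_props(3)[OF pl] by simp
lemma bk_inj: "1 \<le> k \<Longrightarrow> k \<le> 3 \<Longrightarrow> inj_on (bk k) (ssyt la 4)"
  unfolding inj_on_def by (metis bk_inv)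

definition Phi where "Phi T = bk 2 (bk 1 (bk 3 (bk 2 T)))"
definition Psi where "Psi T = bk 1 (bk 3 T)"

lemma Phi_in: "T \<in> ssyt la 4 \<Longrightarrow> Phi T \<in> ssyt la 4"
  unfolding Phi_def by (simp add: bk_in)
lemma Psi_in: "T \<in> ssyt la 4 \<Longrightarrow> Psi T \<in> ssyt la 4"
  unfolding Psi_def by (simp add: bk_in)
lemma Phi_inj: "inj_on Phi (ssyt la 4)"
  unfolding inj_on_def
proof (intro ballI impI)
  fix x y assume x: "x \<in> ssyt la 4" and y: "y \<in> ssyt la 4" and e: "Phi x = Phi y"
  have k: "(1::nat) \<le> 1" "(1::nat) \<le> 2" "(1::nat) \<le> 3" "(1::nat) \<le> 3" "(2::nat) \<le> 3" "(3::nat) \<le> 3" by simp_all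
  have x1: "bk 2 x \<in> ssyt la 4" "bk 3 (bk 2 x) \<in> ssyt la 4" "bk 1 (bk 3 (bk 2 x)) \<in> ssyt la 4"
    using x by (simp_all add: bk_in)
  have y1: "bk 2 y \<in> ssyt la 4" "bk 3 (bk 2 y) \<in> ssyt la 4" "bk 1 (bk 3 (bk 2 y)) \<in> ssyt la 4"
    using y by (simp_all add: bk_in)
  have "bk 2 (bk 2 (bk 1 (bk 3 (bk 2 x)))) = bk 2 (bk 2 (bk 1 (bk 3 (bk 2 y))))" using e by (simp add: Phi_def)
  then have "bk 1 (bk 3 (bk 2 x)) = bk 1 (bk 3 (bk 2 y))" using bk_inv[OF x1(3)] bk_inv[OF y1(3)] by simp
  then have "bk 1 (bk 1 (bk 3 (bk 2 x))) = bk 1 (bk 1 (bk 3 (bk 2 y)))" by simp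
  then have "bk 3 (bk 2 x) = bk 3 (bk 2 y)" using bk_inv[OF x1(2)] bk_inv[OF y1(2)] by simp
  then have "bk 3 (bk 3 (bk 2 x)) = bk 3 (bk 3 (bk 2 y))" by simp
  then have "bk 2 x = bk 2 y" using bk_inv[OF x1(1)] bk_inv[OF y1(1)] by simp
  then have "bk 2 (bk 2 x) = bk 2 (bk 2 y)" by simp
  then show "x = y" using bk_inv[OF x] bk_inv[OF y] by simp
qed
lemma Psi_inj: "inj_on Psi (ssyt la 4)"
  unfolding inj_on_def
proof (intro ballI impI)
  fix x y assume x: "x \<in> ssyt la 4" and y: "y \<in> ssyt la 4" and e: "Psi x = Psi y"
  have x1: "bk 3 x \<in> ssyt la 4" using x by (simp add: bk_in)
  have y1: "bk 3 y \<in> ssyt la 4" using y by (simp add: bk_in)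
  have "bk 1 (bk 1 (bk 3 x)) = bk 1 (bk 1 (bk 3 y))" using e by (simp add: Psi_def)
  then have "bk 3 x = bk 3 y" using bk_inv[OF x1] bk_inv[OF y1] by simp
  then have "bk 3 (bk 3 x) = bk 3 (bk 3 y)" by simp
  then show "x = y" using bk_inv[OF x] bk_inv[OF y] by simp
qed

lemma Phi_cnt: "T \<in> ssyt la 4 \<Longrightarrow> cnt la (Phi T) v = cnt la T (sw 2 (sw 3 (sw 1 (sw 2 v))))"
  unfolding Phi_def by (simp add: bk_in bk_cnt)
lemma Psi_cnt: "T \<in> ssyt la 4 \<Longrightarrow> cnt la (Psi T) v = cnt la T (sw 3 (sw 1 v))"
  unfolding Psi_def by (simp add: bk_in bk_cnt)

lemma bT_Phi: "T \<in> ssyt la 4 \<Longrightarrow> bT la (Phi T) = sum_list la - bT la T"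
  using cnt_total[of T la] by (simp add: bT_def Phi_cnt sw_def)
lemma dT_Phi: "T \<in> ssyt la 4 \<Longrightarrow> dT la (Phi T) = dT la T"
  by (simp add: dT_def Phi_cnt sw_def)
lemma bT_Psi: "T \<in> ssyt la 4 \<Longrightarrow> bT la (Psi T) = bT la T"
  by (simp add: bT_def Psi_cnt sw_def)
lemma dT_Psi: "T \<in> ssyt la 4 \<Longrightarrow> dT la (Psi T) = sum_list la - dT la T"
  using cnt_total[of T la] by (simp add: dT_def Psi_cnt sw_def)

lemma bT_le: "T \<in> ssyt la 4 \<Longrightarrow> bT la T \<le> sum_list la"
  using cnt_total[of T la] by (simp add: bT_def)
lemma dT_le: "T \<in> ssyt la 4 \<Longrightarrow> dT la T \<le> sum_list la"
  using cnt_total[of T la] by (simp add: dT_def)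

lemma NN_le1: "j \<le> sum_list la \<Longrightarrow> NN la j k \<le> NN la (sum_list la - j) k"
  unfolding NN_def
  by (rule card_le_map[OF finite_ssyt _ Phi_inj]) (auto simp: Phi_in bT_Phi dT_Phi)
lemma NN_sym1: "j \<le> sum_list la \<Longrightarrow> NN la (sum_list la - j) k = NN la j k"
  using NN_le1[of j k] NN_le1[of "sum_list la - j" k] by simp

lemma NN_le2: "k \<le> sum_list la \<Longrightarrow> NN la j k \<le> NN la j (sum_list la - k)"
  unfolding NN_def
  by (rule card_le_map[OF finite_ssyt _ Psi_inj]) (auto simp: Psi_in bT_Psi dT_Psi)
lemma NN_sym2: "k \<le> sum_list la \<Longrightarrow> NN la j (sum_list la - k) = NN la j k"
  using NN_le2[of k j] NN_le2[of "sum_list la - k" j] by simp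

end


lemma sum_ind_lt: "a \<le> b \<Longrightarrow> (\<Sum>j<b. if j < a then 1 else 0::nat) = a"
proof -
  assume ab: "a \<le> b"
  have "(\<Sum>j<b. if j < a then 1 else 0::nat) = card {j\<in>{..<b}. j < a}"
    by (simp add: sum.inter_filter[symmetric])
  also have "{j\<in>{..<b}. j < a} = {..<a}" using ab by auto
  finally show ?thesis by simp
qed

context
  fixes la :: "nat list"
  assumes len: "length la = 4" and pl: "part la"
begin

lemma la_mono: "la ! 1 \<le> la ! 0" "la ! 2 \<le> la ! 1" "la ! 3 \<le> la ! 2"
proof -
  have h: "\<And>i. Suc i < 4 \<Longrightarrow> la ! Suc i \<le> la ! i" using pl len unfolding part_def by auto
  show "la ! 1 \<le> la ! 0" using h[of 0] by simp
  show "la ! 2 \<le> la ! 1" using h[of 1] by (simp add: numeral_2_eq_2)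
  show "la ! 3 \<le> la ! 2" using h[of 2] by (simp add: numeral_2_eq_2 numeral_3_eq_3)
qed

lemma col_card:
  "card {c\<in>cells la. P c} = (\<Sum>j<la!0. \<Sum>i<4. if j < la ! i \<and> P (i,j) then 1 else 0)"
proof -
  let ?B = "{..<4::nat} \<times> {..<la!0}"
  have lam: "i < 4 \<Longrightarrow> la ! i \<le> la ! 0" for i
  proof -
    assume "i < 4"
    then have "i = 0 \<or> i = 1 \<or> i = 2 \<or> i = 3" by auto
    then show ?thesis using la_mono by auto
  qed
  have e: "{c\<in>cells la. P c} = {c\<in>?B. (case c of (i,j) \<Rightarrow> j < la ! i \<and> P (i,j))}"
    using lam len by (fastforce simp: cells_def)
  have "card {c\<in>cells la. P c} = (\<Sum>c\<in>?B. if (case c of (i,j) \<Rightarrow> j < la ! i \<and> P (i,j)) then 1 else 0)"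
    unfolding e by (simp add: sum.inter_filter[symmetric])
  also have "\<dots> = (\<Sum>i<4. \<Sum>j<la!0. if j < la ! i \<and> P (i,j) then 1 else 0)"
    by (subst sum.cartesian_product) (simp add: split_def)
  also have "\<dots> = (\<Sum>j<la!0. \<Sum>i<4. if j < la ! i \<and> P (i,j) then 1 else 0)"
    by (rule sum.swap)
  finally show ?thesis .
qed

lemma four: "(\<Sum>i<(4::nat). f i) = f 0 + f 1 + f 2 + (f 3 :: nat)"
  by (simp add: numeral_eq_Suc lessThan_Suc)

context
  fixes T assumes T: "T \<in> ssyt la 4"
begin

lemma cellc: "i < 4 \<Longrightarrow> (i,j) \<in> cells la \<longleftrightarrow> j < la ! i"
  using len by (simp add: cells_def)

lemma colfacts:
  shows "j < la!0 \<Longrightarrow> 1 \<le> T (0,j) \<and> T (0,j) \<le> 4"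
    and "j < la!1 \<Longrightarrow> 1 \<le> T (1,j) \<and> T (1,j) \<le> 4 \<and> T (0,j) < T (1,j)"
    and "j < la!2 \<Longrightarrow> 1 \<le> T (2,j) \<and> T (2,j) \<le> 4 \<and> T (1,j) < T (2,j)"
    and "j < la!3 \<Longrightarrow> 1 \<le> T (3,j) \<and> T (3,j) \<le> 4 \<and> T (2,j) < T (3,j)"
proof -
  show "j < la!0 \<Longrightarrow> 1 \<le> T (0,j) \<and> T (0,j) \<le> 4" using ssyt_rng[OF T, of 0 j] cellc[of 0 j] by simp
  show "j < la!1 \<Longrightarrow> 1 \<le> T (1,j) \<and> T (1,j) \<le> 4 \<and> T (0,j) < T (1,j)"
    using ssyt_rng[OF T, of 1 j] cellc[of 1 j] ssyt_col[OF T, of 0 j] by simp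
  show "j < la!2 \<Longrightarrow> 1 \<le> T (2,j) \<and> T (2,j) \<le> 4 \<and> T (1,j) < T (2,j)"
    using ssyt_rng[OF T, of 2 j] cellc[of 2 j] ssyt_col[OF T, of 1 j] by (simp add: numeral_2_eq_2)
  show "j < la!3 \<Longrightarrow> 1 \<le> T (3,j) \<and> T (3,j) \<le> 4 \<and> T (2,j) < T (3,j)"
    using ssyt_rng[OF T, of 3 j] cellc[of 3 j] ssyt_col[OF T, of 2 j] by (simp add: numeral_3_eq_3 numeral_2_eq_2)
qed

lemma cnt_or: "cnt la T a + cnt la T b = card {c\<in>cells la. T c = a \<or> T c = b}" if "a \<noteq> b"
proof -
  have "{c\<in>cells la. T c = a \<or> T c = b} = {c\<in>cells la. T c = a} \<union> {c\<in>cells la. T c = b}" by auto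
  moreover have "finite {c\<in>cells la. T c = v}" for v by (rule finite_subset[OF _ finite_cells]) auto
  ultimately show ?thesis unfolding cnt_def using that by (simp add: card_Un_disjoint disjoint_iff)
qed

lemma dT_bound: "la ! 2 + la ! 3 \<le> dT la T"
proof -
  have "dT la T = (\<Sum>j<la!0. \<Sum>i<4. if j < la ! i \<and> (T (i,j) = 2 \<or> T (i,j) = 4) then 1 else 0)"
    unfolding dT_def by (simp add: cnt_or col_card)
  also have "\<dots> \<ge> (\<Sum>j<la!0. (if j < la!2 then 1 else 0) + (if j < la!3 then 1 else 0))"
  proof (rule sum_mono)
    fix j assume "j \<in> {..<la!0}"
    then have j: "j < la!0" by simp
    show "(if j < la!2 then 1 else 0) + (if j < la!3 then 1 else 0)
          \<le> (\<Sum>i<4. if j < la ! i \<and> (T (i,j) = 2 \<or> T (i,j) = 4) then 1 else (0::nat))"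
    proof -
      consider "j < la!3" | "\<not> j < la!3" "j < la!2" | "\<not> j < la!2" by blast
      then show ?thesis
      proof cases
        case 1
        then have "T (1,j) = 2" "T (3,j) = 4" "j < la!1" "j < la!2"
          using colfacts[of j] j la_mono by auto
        then show ?thesis unfolding four using 1 by simp
      next
        case 2
        then have "T (1,j) = 2 \<or> T (2,j) = 4" "j < la!1"
          using colfacts[of j] j la_mono by auto
        then show ?thesis unfolding four using 2 by auto
      next
        case 3
        then show ?thesis using la_mono by simp
      qed
    qed
  qed
  also have "(\<Sum>j<la!0. (if j < la!2 then 1 else 0) + (if j < la!3 then 1 else 0)) = la!2 + la!3"
    using la_mono by (simp add: sum.distrib sum_ind_lt)
  finally show ?thesis by simp
qed

lemma bdT_bound: "la ! 1 + la ! 2 + 2 * la ! 3 \<le> bT la T + dT la T"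
proof -
  have "bT la T + dT la T = (\<Sum>j<la!0. (\<Sum>i<4. if j < la ! i \<and> (T (i,j) = 3 \<or> T (i,j) = 4) then 1 else 0)
        + (\<Sum>i<4. if j < la ! i \<and> (T (i,j) = 2 \<or> T (i,j) = 4) then 1 else 0))"
    unfolding dT_def bT_def by (simp add: cnt_or col_card sum.distrib)
  also have "\<dots> \<ge> (\<Sum>j<la!0. ((if j < la!1 then 1 else 0) + (if j < la!2 then 1 else 0)) + 2 * (if j < la!3 then 1 else 0))"
  proof (rule sum_mono)
    fix j assume "j \<in> {..<la!0}"
    then have j: "j < la!0" by simp
    show "((if j < la!1 then 1 else 0) + (if j < la!2 then 1 else 0)) + 2 * (if j < la!3 then 1 else 0)
          \<le> (\<Sum>i<4. if j < la ! i \<and> (T (i,j) = 3 \<or> T (i,j) = 4) then 1 else (0::nat))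
           + (\<Sum>i<4. if j < la ! i \<and> (T (i,j) = 2 \<or> T (i,j) = 4) then 1 else (0::nat))"
    proof -
      consider "j < la!3" | "\<not> j < la!3" "j < la!2" | "\<not> j < la!2" "j < la!1" | "\<not> j < la!1" by blast
      then show ?thesis
      proof cases
        case 1
        then have "T (1,j) = 2" "T (2,j) = 3" "T (3,j) = 4" "j < la!1" "j < la!2"
          using colfacts[of j] j la_mono by auto
        then show ?thesis unfolding four using 1 by simp
      next
        case 2
        then have "T (1,j) = 2 \<or> T (1,j) = 3" "T (2,j) = 3 \<or> T (2,j) = 4" "j < la!1"
          using colfacts[of j] j la_mono by auto
        then show ?thesis unfolding four using 2 by auto
      next
        case 3
        then have "T (1,j) = 2 \<or> T (1,j) = 3 \<or> T (1,j) = 4"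
          using colfacts[of j] j la_mono by auto
        then show ?thesis unfolding four using 3 la_mono by auto
      next
        case 4
        then show ?thesis using la_mono by simp
      qed
    qed
  qed
  also have "(\<Sum>j<la!0. ((if j < la!1 then 1 else 0) + (if j < la!2 then 1 else 0)) + 2 * (if j < la!3 then 1 else 0)) = la!1 + la!2 + 2 * la!3"
    using la_mono by (simp add: sum.distrib sum_ind_lt sum_distrib_left[symmetric])
  finally show ?thesis by simp
qed

end
end


lemma downclosed_eq:
  assumes "finite D" "\<And>p q. p \<in> D \<Longrightarrow> q < p \<Longrightarrow> q \<in> D"
  shows "D = {..<card D}"
proof (cases "D = {}")
  case True then show ?thesis by simp
next
  case False
  let ?M = "Max D"
  have "D = {..?M}"
  proof
    show "D \<subseteq> {..?M}" using assms(1) by auto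
    show "{..?M} \<subseteq> D"
    proof
      fix q assume "q \<in> {..?M}"
      then have "q \<le> ?M" by simp
      moreover have "?M \<in> D" using assms(1) False by simp
      ultimately show "q \<in> D" using assms(2) by (cases "q = ?M") auto
    qed
  qed
  then show ?thesis by (metis card_atMost lessThan_Suc_atMost)
qed

definition Tr :: "nat \<Rightarrow> nat \<Rightarrow> nat \<Rightarrow> (nat\<times>nat \<Rightarrow> nat)" where
  "Tr a b r = (\<lambda>(i,j). if i = 0 \<and> j < a then (if j < a - r then 1 else 2) else if i = 1 \<and> j < b then 2 else 0)"

lemma cells2: "(i,j) \<in> cells [a,b] \<longleftrightarrow> (i = 0 \<and> j < a) \<or> (i = 1 \<and> j < b)"
  by (auto simp: cells_def nth_Cons split: nat.splits)

lemma cnt2_eq: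
  assumes "\<And>p. p < a \<Longrightarrow> T (0,p) = 2 \<longleftrightarrow> s \<le> p" "\<And>p. p < b \<Longrightarrow> T (1,p) = 2" "s \<le> a"
  shows "cnt [a,b] T 2 = (a - s) + b"
proof -
  have e: "{c\<in>cells [a,b]. T c = 2} = (\<lambda>p. (0,p)) ` {s..<a} \<union> (\<lambda>p. (1,p)) ` {..<b}"
  proof -
    have "c \<in> cells [a,b] \<and> T c = 2 \<longleftrightarrow> c \<in> (\<lambda>p. (0,p)) ` {s..<a} \<union> (\<lambda>p. (1,p)) ` {..<b}" for c
    proof -
      obtain i j where c: "c = (i,j)" by force
      show ?thesis unfolding c cells2 using assms by auto
    qed
    then show ?thesis by blast
  qed
  have "card ((\<lambda>p. (0::nat,p)) ` {s..<a} \<union> (\<lambda>p. (1::nat,p)) ` {..<b}) = card ((\<lambda>p. (0::nat,p)) ` {s..<a}) + card ((\<lambda>p. (1::nat,p)) ` {..<b})"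
    by (rule card_Un_disjoint) auto
  also have "\<dots> = (a - s) + b" by (simp add: card_image inj_on_def)
  finally show ?thesis unfolding cnt_def e .
qed

lemma Tr_ssyt: "b \<le> a \<Longrightarrow> r \<le> a - b \<Longrightarrow> Tr a b r \<in> ssyt [a,b] 2"
  unfolding ssyt_def
proof (intro CollectI conjI allI impI ballI)
  assume ab: "b \<le> a" "r \<le> a - b"
  fix c
  { assume "c \<notin> cells [a,b]" then show "Tr a b r c = 0" by (cases c) (auto simp: cells2 Tr_def) }
  { assume "c \<in> cells [a,b]" then show "1 \<le> Tr a b r c" "Tr a b r c \<le> 2" by (cases c, auto simp: cells2 Tr_def)+ }
next
  fix i j
  assume ab: "b \<le> a" "r \<le> a - b"
  { assume "(i, Suc j) \<in> cells [a,b]" then show "Tr a b r (i,j) \<le> Tr a b r (i, Suc j)"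
      by (auto simp: cells2 Tr_def) }
  { assume "(Suc i, j) \<in> cells [a,b]" then show "Tr a b r (i,j) < Tr a b r (Suc i, j)"
      using ab by (auto simp: cells2 Tr_def) }
qed

lemma Tr_cnt: "b \<le> a \<Longrightarrow> r \<le> a - b \<Longrightarrow> cnt [a,b] (Tr a b r) 2 = b + r"
proof -
  assume ab: "b \<le> a" "r \<le> a - b"
  have "cnt [a,b] (Tr a b r) 2 = (a - (a - r)) + b"
    by (rule cnt2_eq) (use ab in \<open>auto simp: Tr_def\<close>)
  then show ?thesis using ab by simp
qed

lemma T_is_Tr:
  assumes ab: "b \<le> a" and T: "T \<in> ssyt [a,b] 2"
  shows "b \<le> cnt [a,b] T 2 \<and> cnt [a,b] T 2 \<le> a \<and> T = Tr a b (cnt [a,b] T 2 - b)"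
proof -
  let ?D = "{p. p < a \<and> T (0,p) = 1}"
  define s where "s = card ?D"
  have rng0: "p < a \<Longrightarrow> T (0,p) = 1 \<or> T (0,p) = 2" for p
    using ssyt_rng[OF T, of 0 p] by (auto simp: cells2)
  have rng1: "p < b \<Longrightarrow> T (1,p) = 2" for p
    using ssyt_rng[OF T, of 1 p] ssyt_rng[OF T, of 0 p] ssyt_col[OF T, of 0 p] ab by (auto simp: cells2)
  have "?D = {..<s}" unfolding s_def
  proof (rule downclosed_eq)
    show "finite ?D" by simp
    fix p q assume p: "p \<in> ?D" and q: "q < p"
    have "T (0,q) \<le> T (0,p)" using ssyt_row_mono[OF T, of 0 p q] p q by (auto simp: cells2)
    then show "q \<in> ?D" using p q rng0[of q] by auto
  qed
  then have D: "p < a \<Longrightarrow> T (0,p) = 1 \<longleftrightarrow> p < s" for p by auto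
  have sa: "s \<le> a" unfolding s_def by (rule le_trans[OF card_mono[of "{..<a}"]]) auto
  have bs: "b \<le> s"
  proof (cases b)
    case 0 then show ?thesis by simp
  next
    case (Suc b')
    have "T (0,b') < T (1,b')" using ssyt_col[OF T, of 0 b'] Suc by (simp add: cells2)
    then have "T (0,b') = 1" using rng1[of b'] rng0[of b'] Suc ab by auto
    then have "b' < s" using D[of b'] Suc ab by simp
    then show ?thesis using Suc by simp
  qed
  have D2: "p < a \<Longrightarrow> T (0,p) = 2 \<longleftrightarrow> s \<le> p" for p
    using D[of p] rng0[of p] by (cases "p < s") auto
  have c2: "cnt [a,b] T 2 = (a - s) + b"
    by (rule cnt2_eq) (use D2 rng1 sa in auto)
  have "T = Tr a b (a - s)"
  proof (rule ext, clarify)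
    fix i j
    show "T (i,j) = Tr a b (a - s) (i,j)"
    proof (cases "(i,j) \<in> cells [a,b]")
      case False
      then show ?thesis using ssyt_out[OF T False] by (auto simp: cells2 Tr_def)
    next
      case True
      then show ?thesis using D[of j] rng0[of j] rng1[of j] sa by (auto simp: cells2 Tr_def)
    qed
  qed
  moreover have "cnt [a,b] T 2 - b = a - s" using c2 sa bs by linarith
  moreover have "b \<le> cnt [a,b] T 2 \<and> cnt [a,b] T 2 \<le> a" using c2 sa bs by linarith
  ultimately show ?thesis by metis
qed

lemma card_2row: "b \<le> a \<Longrightarrow> card {T\<in>ssyt [a,b] 2. cnt [a,b] T 2 = j} = (if b \<le> j \<and> j \<le> a then 1 else 0)"
proof -
  assume ab: "b \<le> a"
  show ?thesis
  proof (cases "b \<le> j \<and> j \<le> a")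
    case True
    have "{T\<in>ssyt [a,b] 2. cnt [a,b] T 2 = j} = {Tr a b (j - b)}"
    proof
      show "{T\<in>ssyt [a,b] 2. cnt [a,b] T 2 = j} \<subseteq> {Tr a b (j - b)}" using T_is_Tr[OF ab] by auto
      show "{Tr a b (j - b)} \<subseteq> {T\<in>ssyt [a,b] 2. cnt [a,b] T 2 = j}"
        using Tr_ssyt[OF ab, of "j - b"] Tr_cnt[OF ab, of "j - b"] True by auto
    qed
    then show ?thesis using True by simp
  next
    case False
    have e: "{T\<in>ssyt [a,b] 2. cnt [a,b] T 2 = j} = {}" using T_is_Tr[OF ab] False by auto
    show ?thesis unfolding e using False by simp
  qed
qed

lemma sum_group_nat:
  fixes h :: "'b \<Rightarrow> nat"
  assumes "finite S" "\<And>T. T \<in> S \<Longrightarrow> h T \<le> n"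
  shows "(\<Sum>T\<in>S. g (h T)) = (\<Sum>j\<le>n. of_nat (card {T\<in>S. h T = j}) * (g j :: 'a::comm_ring_1))"
proof -
  have "(\<Sum>T\<in>S. g (h T)) = (\<Sum>j\<in>{..n}. \<Sum>T\<in>{T\<in>S. h T = j}. g (h T))"
    by (rule sum.group[symmetric]) (use assms in auto)
  also have "\<dots> = (\<Sum>j\<le>n. of_nat (card {T\<in>S. h T = j}) * g j)"
    by (rule sum.cong[OF refl]) simp
  finally show ?thesis .
qed

lemma prod_vars2:
  assumes T: "T \<in> ssyt la 2"
  shows "(\<Prod>c\<in>cells la. vars2 x1 x2 (T c)) = x1 ^ (sum_list la - cnt la T 2) * x2 ^ cnt la T 2"
proof -
  have "(\<Prod>c\<in>cells la. vars2 x1 x2 (T c)) = (\<Prod>c\<in>cells la. if T c = 1 then x1 else x2)"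
    by (simp add: vars2_def)
  also have "\<dots> = x1 ^ card (cells la \<inter> {c. T c = 1}) * x2 ^ card (cells la \<inter> - {c. T c = 1})"
    by (simp add: prod.If_cases finite_cells)
  also have "cells la \<inter> - {c. T c = 1} = {c\<in>cells la. T c = 2}"
    using ssyt_rng[OF T] by fastforce
  also have "card (cells la \<inter> {c. T c = 1}) = sum_list la - cnt la T 2"
  proof -
    have "cells la = (cells la \<inter> {c. T c = 1}) \<union> {c\<in>cells la. T c = 2}"
      using ssyt_rng[OF T] by fastforce
    moreover have "card ((cells la \<inter> {c. T c = 1}) \<union> {c\<in>cells la. T c = 2}) = card (cells la \<inter> {c. T c = 1}) + card {c\<in>cells la. T c = 2}"
      by (rule card_Un_disjoint) (auto simp: finite_cells)
    ultimately have "card (cells la) = card (cells la \<inter> {c. T c = 1}) + card {c\<in>cells la. T c = 2}"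
      by simp
    then show ?thesis using card_cells[of la] by (simp add: cnt_def)
  qed
  finally show ?thesis by (simp add: cnt_def)
qed

lemma cnt_le_n: "cnt la T v \<le> sum_list la"
  unfolding cnt_def using card_cells[of la] by (metis (no_types, lifting) card_mono finite_cells mem_Collect_eq subsetI)

lemma schur2:
  assumes "b \<le> a"
  shows "schur [a,b] 2 (vars2 x1 x2) = (\<Sum>j\<le>a+b. (if b \<le> j \<and> j \<le> a then 1 else 0) * x1 ^ (a + b - j) * x2 ^ j)"
proof -
  have "schur [a,b] 2 (vars2 x1 x2) = (\<Sum>T\<in>ssyt [a,b] 2. x1 ^ (a + b - cnt [a,b] T 2) * x2 ^ cnt [a,b] T 2)"
    unfolding schur_def by (rule sum.cong[OF refl]) (simp add: prod_vars2)
  also have "\<dots> = (\<Sum>j\<le>a+b. of_nat (card {T\<in>ssyt [a,b] 2. cnt [a,b] T 2 = j}) * (x1 ^ (a + b - j) * x2 ^ j))"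
    by (rule sum_group_nat[where g = "\<lambda>j. x1 ^ (a + b - j) * x2 ^ j"]) (use cnt_le_n[of "[a,b]"] finite_ssyt in auto)
  also have "\<dots> = (\<Sum>j\<le>a+b. (if b \<le> j \<and> j \<le> a then 1 else 0) * x1 ^ (a + b - j) * x2 ^ j)"
    by (rule sum.cong[OF refl]) (simp add: card_2row[OF assms])
  finally show ?thesis .
qed


definition E :: "nat \<Rightarrow> nat \<Rightarrow> nat \<Rightarrow> int" where
  "E n b j = (if b \<le> j \<and> j \<le> n - b then 1 else 0)"

definition CC :: "nat \<Rightarrow> (nat \<Rightarrow> nat \<Rightarrow> int) \<Rightarrow> nat \<Rightarrow> nat \<Rightarrow> int" where
  "CC n e j k = (\<Sum>b\<le>n div 2. \<Sum>d\<le>n div 2. e b d * E n b j * E n d k)"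

lemma sum_if_out: "(\<Sum>x\<in>A. if P then f x else 0) = (if P then sum f A else 0)"
  by (cases P) auto

lemma mult_if_one: "x * (if P then 1 else 0) = (if P then x else (0::int))"
  by simp

lemma coeff_unique:
  fixes A B :: "nat \<Rightarrow> nat \<Rightarrow> real"
  assumes "\<And>x1 x2 y1 y2. (\<Sum>j\<le>n. \<Sum>k\<le>n. A j k * (x1^(n-j) * x2^j) * (y1^(n-k) * y2^k))
                       = (\<Sum>j\<le>n. \<Sum>k\<le>n. B j k * (x1^(n-j) * x2^j) * (y1^(n-k) * y2^k))"
  shows "j \<le> n \<Longrightarrow> k \<le> n \<Longrightarrow> A j k = B j k"
proof -
  have r: "(\<Sum>j\<le>n. \<Sum>k\<le>n. C j k * (1^(n-j) * x^j) * (1^(n-k) * y^k)) = (\<Sum>k\<le>n. (\<Sum>j\<le>n. C j k * x^j) * y^k)"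
    for C :: "nat \<Rightarrow> nat \<Rightarrow> real" and x y
    by (subst sum.swap) (simp add: sum_distrib_left mult_ac)
  have "\<forall>y. (\<Sum>k\<le>n. (\<Sum>j\<le>n. A j k * x^j) * y^k) = (\<Sum>k\<le>n. (\<Sum>j\<le>n. B j k * x^j) * y^k)" for x
    using assms[of 1 x 1] r by simp
  then have "\<forall>x. (\<Sum>j\<le>n. A j k * x^j) = (\<Sum>j\<le>n. B j k * x^j)" if "k \<le> n" for k
    using that by (simp add: polyfun_eq_coeffs)
  then show "j \<le> n \<Longrightarrow> k \<le> n \<Longrightarrow> A j k = B j k"
    by (simp add: polyfun_eq_coeffs)
qed

lemma CC_diff: "CC n (\<lambda>b d. e1 b d - e2 b d) j k = CC n e1 j k - CC n e2 j k"
  by (simp add: CC_def sum_subtractf left_diff_distrib)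

lemma CC_cong: "(\<And>b d. b \<le> n div 2 \<Longrightarrow> d \<le> n div 2 \<Longrightarrow> e1 b d = e2 b d) \<Longrightarrow> CC n e1 j k = CC n e2 j k"
  by (simp add: CC_def)

lemma E_small: "b \<le> n div 2 \<Longrightarrow> E n b' b = (if b' \<le> b then 1 else 0)"
proof -
  assume a: "b \<le> n div 2"
  have "b' \<le> b \<Longrightarrow> b \<le> n - b'" using a by linarith
  then show ?thesis by (auto simp: E_def)
qed

lemma CC_small:
  assumes "b \<le> n div 2" "d \<le> n div 2"
  shows "CC n e b d = (\<Sum>b'\<le>n div 2. \<Sum>d'\<le>n div 2. if b' \<le> b \<and> d' \<le> d then e b' d' else 0)"
  unfolding CC_def using assms by (intro sum.cong refl) (auto simp: E_small)

lemma CC_inv: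
  assumes down: "\<And>b d b' d'. (b,d) \<in> R \<Longrightarrow> b' \<le> b \<Longrightarrow> d' \<le> d \<Longrightarrow> (b',d') \<in> R"
    and box: "\<And>b d. (b,d) \<in> R \<Longrightarrow> b \<le> n div 2 \<and> d \<le> n div 2"
    and z: "\<And>b d. (b,d) \<in> R \<Longrightarrow> CC n e b d = 0"
  shows "(b,d) \<in> R \<Longrightarrow> e b d = 0"
proof (induction "b + d" arbitrary: b d rule: less_induct)
  case less
  have bd: "b \<le> n div 2" "d \<le> n div 2" using box[OF less.prems] by auto
  have "CC n e b d = (\<Sum>b'\<le>n div 2. \<Sum>d'\<le>n div 2. if b' = b \<and> d' = d then e b d else 0)"
    unfolding CC_small[OF bd]
  proof (intro sum.cong refl)
    fix b' d' assume "b' \<in> {..n div 2}" "d' \<in> {..n div 2}"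
    show "(if b' \<le> b \<and> d' \<le> d then e b' d' else 0) = (if b' = b \<and> d' = d then e b d else 0)"
    proof (cases "b' \<le> b \<and> d' \<le> d \<and> \<not> (b' = b \<and> d' = d)")
      case True
      then have "e b' d' = 0" using less.hyps[of b' d'] down[OF less.prems] by auto
      then show ?thesis using True by auto
    next
      case False then show ?thesis by auto
    qed
  qed
  also have "\<dots> = e b d" using bd by (simp add: sum.delta' sum_if_out flip: if_if_eq_conj)
  finally show ?case using z[OF less.prems] by simp
qed

definition D1 :: "(nat \<Rightarrow> int) \<Rightarrow> nat \<Rightarrow> int" where
  "D1 f x = f x - (if x = 0 then 0 else f (x - 1))"

lemma tele: "(\<Sum>x\<le>J. D1 f x) = f J"
  by (induction J) (auto simp: D1_def)

lemma sum_restrict: "J \<le> (M::nat) \<Longrightarrow> (\<Sum>b\<le>M. if b \<le> J then f b else 0) = (\<Sum>b\<le>J. f b)"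
proof -
  assume "J \<le> M"
  then have "{b\<in>{..M}. b \<le> J} = {..J}" by auto
  then show ?thesis by (simp add: sum.inter_filter[symmetric])
qed

lemma CC_tele:
  fixes g :: "nat \<Rightarrow> nat \<Rightarrow> int"
  assumes "j \<le> n" "k \<le> n"
  shows "CC n (\<lambda>b d. D1 (\<lambda>b. D1 (g b) d) b) j k = g (min j (n - j)) (min k (n - k))"
proof -
  let ?J = "min j (n - j)" and ?K = "min k (n - k)"
  have EJ: "E n b j = (if b \<le> ?J then 1 else 0)" for b using assms by (auto simp: E_def)
  have EK: "E n d k = (if d \<le> ?K then 1 else 0)" for d using assms by (auto simp: E_def)
  have J: "?J \<le> n div 2" and K: "?K \<le> n div 2" by auto
  have "CC n (\<lambda>b d. D1 (\<lambda>b. D1 (g b) d) b) j k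
        = (\<Sum>b\<le>n div 2. if b \<le> ?J then (\<Sum>d\<le>n div 2. if d \<le> ?K then D1 (\<lambda>b. D1 (g b) d) b else 0) else 0)"
    unfolding CC_def EJ EK
  proof (intro sum.cong refl)
    fix b
    show "(\<Sum>d\<le>n div 2. D1 (\<lambda>b. D1 (g b) d) b * (if b \<le> ?J then 1 else 0) * (if d \<le> ?K then 1 else 0))
      = (if b \<le> ?J then (\<Sum>d\<le>n div 2. if d \<le> ?K then D1 (\<lambda>b. D1 (g b) d) b else 0) else 0)"
      by (cases "b \<le> ?J") (auto intro: sum.cong)
  qed
  also have "\<dots> = (\<Sum>b\<le>?J. \<Sum>d\<le>?K. D1 (\<lambda>b. D1 (g b) d) b)"
    by (simp only: sum_restrict[OF J] sum_restrict[OF K])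
  also have "\<dots> = (\<Sum>d\<le>?K. \<Sum>b\<le>?J. D1 (\<lambda>b. D1 (g b) d) b)" by (rule sum.swap)
  also have "\<dots> = (\<Sum>d\<le>?K. D1 (g ?J) d)" by (simp add: tele)
  also have "\<dots> = g ?J ?K" by (rule tele)
  finally show ?thesis .
qed


lemma prod_if_pow:
  assumes "finite A"
  shows "(\<Prod>c\<in>A. if P c then u else w) = u ^ card {c\<in>A. P c} * (w::real) ^ (card A - card {c\<in>A. P c})"
proof -
  have "A \<inter> - {x. P x} = A - {c\<in>A. P c}" by auto
  then have "card (A \<inter> - {x. P x}) = card A - card {c\<in>A. P c}"
    using assms by (simp add: card_Diff_subset)
  moreover have "A \<inter> {x. P x} = {c\<in>A. P c}" by auto
  ultimately show ?thesis using assms by (simp add: prod.If_cases)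
qed

lemma sum_group_pair:
  fixes h1 h2 :: "'b \<Rightarrow> nat"
  assumes "finite S" "\<And>T. T \<in> S \<Longrightarrow> h1 T \<le> n" "\<And>T. T \<in> S \<Longrightarrow> h2 T \<le> n"
  shows "(\<Sum>T\<in>S. g (h1 T) (h2 T)) = (\<Sum>j\<le>n. \<Sum>k\<le>n. of_nat (card {T\<in>S. h1 T = j \<and> h2 T = k}) * (g j k :: real))"
proof -
  have "(\<Sum>T\<in>S. g (h1 T) (h2 T)) = (\<Sum>p\<in>{..n}\<times>{..n}. \<Sum>T\<in>{T\<in>S. (h1 T, h2 T) = p}. g (h1 T) (h2 T))"
    by (rule sum.group[symmetric]) (use assms in auto)
  also have "\<dots> = (\<Sum>p\<in>{..n}\<times>{..n}. of_nat (card {T\<in>S. h1 T = fst p \<and> h2 T = snd p}) * g (fst p) (snd p))"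
  proof (rule sum.cong[OF refl])
    fix p :: "nat \<times> nat"
    obtain j k where p: "p = (j,k)" by force
    have "(\<Sum>T\<in>{T\<in>S. (h1 T, h2 T) = p}. g (h1 T) (h2 T)) = (\<Sum>T\<in>{T\<in>S. h1 T = j \<and> h2 T = k}. g j k)"
      unfolding p by (rule sum.cong) auto
    then show "(\<Sum>T\<in>{T\<in>S. (h1 T, h2 T) = p}. g (h1 T) (h2 T)) = of_nat (card {T\<in>S. h1 T = fst p \<and> h2 T = snd p}) * g (fst p) (snd p)"
      unfolding p by simp
  qed
  also have "\<dots> = (\<Sum>j\<le>n. \<Sum>k\<le>n. of_nat (card {T\<in>S. h1 T = j \<and> h2 T = k}) * g j k)"
    by (subst sum.cartesian_product) (simp add: split_def)
  finally show ?thesis .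
qed

lemma swap4: "(\<Sum>b\<in>B. \<Sum>d\<in>D. \<Sum>j\<in>J. \<Sum>k\<in>K. f b d j k) = (\<Sum>j\<in>J. \<Sum>k\<in>K. \<Sum>b\<in>B. \<Sum>d\<in>D. (f b d j k :: real))"
proof -
  have "(\<Sum>b\<in>B. \<Sum>d\<in>D. \<Sum>j\<in>J. \<Sum>k\<in>K. f b d j k) = (\<Sum>b\<in>B. \<Sum>j\<in>J. \<Sum>d\<in>D. \<Sum>k\<in>K. f b d j k)"
    by (rule sum.cong[OF refl], rule sum.swap)
  also have "\<dots> = (\<Sum>j\<in>J. \<Sum>b\<in>B. \<Sum>d\<in>D. \<Sum>k\<in>K. f b d j k)" by (rule sum.swap)
  also have "\<dots> = (\<Sum>j\<in>J. \<Sum>b\<in>B. \<Sum>k\<in>K. \<Sum>d\<in>D. f b d j k)"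
    by (rule sum.cong[OF refl], rule sum.cong[OF refl], rule sum.swap)
  also have "\<dots> = (\<Sum>j\<in>J. \<Sum>k\<in>K. \<Sum>b\<in>B. \<Sum>d\<in>D. f b d j k)"
    by (rule sum.cong[OF refl], rule sum.swap)
  finally show ?thesis .
qed

lemma TRP_eq: "two_row_parts n = (\<lambda>b. [n - b, b]) ` {..n div 2}"
proof
  show "two_row_parts n \<subseteq> (\<lambda>b. [n - b, b]) ` {..n div 2}"
  proof
    fix mu assume "mu \<in> two_row_parts n"
    then obtain a b where "mu = [a,b]" "b \<le> a" "a + b = n" by (auto simp: two_row_parts_def)
    then have "b \<le> n div 2" "mu = [n - b, b]" by auto
    then show "mu \<in> (\<lambda>b. [n - b, b]) ` {..n div 2}" by auto
  qed
  show "(\<lambda>b. [n - b, b]) ` {..n div 2} \<subseteq> two_row_parts n"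
  proof
    fix mu assume "mu \<in> (\<lambda>b. [n - b, b]) ` {..n div 2}"
    then obtain b where "b \<le> n div 2" "mu = [n - b, b]" by auto
    then show "mu \<in> two_row_parts n" unfolding two_row_parts_def by auto
  qed
qed

lemma schur2E: "b \<le> n div 2 \<Longrightarrow> schur [n - b, b] 2 (vars2 x1 x2) = (\<Sum>j\<le>n. of_int (E n b j) * (x1 ^ (n - j) * x2 ^ j))"
proof -
  assume b: "b \<le> n div 2"
  then have "b \<le> n - b" by linarith
  then have "schur [n - b, b] 2 (vars2 x1 x2) = (\<Sum>j\<le>(n - b) + b. (if b \<le> j \<and> j \<le> n - b then 1 else 0) * x1 ^ ((n - b) + b - j) * x2 ^ j)"
    by (rule schur2)
  also have "(n - b) + b = n" using b by linarith
  finally show ?thesis by (auto simp: E_def mult.assoc intro!: sum.cong)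
qed

lemma prod3: "(a::real) * (\<Sum>j\<in>J. p j) * (\<Sum>k\<in>K. q k) = (\<Sum>j\<in>J. \<Sum>k\<in>K. a * p j * q k)"
proof -
  have "a * (\<Sum>j\<in>J. p j) * (\<Sum>k\<in>K. q k) = a * ((\<Sum>j\<in>J. p j) * (\<Sum>k\<in>K. q k))" by (simp only: mult.assoc)
  also have "\<dots> = a * (\<Sum>j\<in>J. \<Sum>k\<in>K. p j * q k)" by (simp only: sum_product)
  also have "\<dots> = (\<Sum>j\<in>J. \<Sum>k\<in>K. a * p j * q k)" by (simp add: sum_distrib_left mult.assoc)
  finally show ?thesis .
qed

lemma RHS_eq:
  fixes c :: "nat list \<Rightarrow> nat list \<Rightarrow> int"
  shows "(\<Sum>mu\<in>two_row_parts n. \<Sum>nu\<in>two_row_parts n. of_int (c mu nu) * schur mu 2 (vars2 x1 x2) * schur nu 2 (vars2 y1 y2))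
   = (\<Sum>j\<le>n. \<Sum>k\<le>n. of_int (CC n (\<lambda>b d. c [n - b, b] [n - d, d]) j k) * (x1 ^ (n - j) * x2 ^ j) * (y1 ^ (n - k) * y2 ^ k))"
proof -
  have inj: "inj_on (\<lambda>b. [n - b, b]) {..n div 2}" by (auto simp: inj_on_def)
  let ?X = "\<lambda>j. x1 ^ (n - j) * x2 ^ j" and ?Y = "\<lambda>k. y1 ^ (n - k) * y2 ^ k"
  have "(\<Sum>mu\<in>two_row_parts n. \<Sum>nu\<in>two_row_parts n. of_int (c mu nu) * schur mu 2 (vars2 x1 x2) * schur nu 2 (vars2 y1 y2))
     = (\<Sum>b\<le>n div 2. \<Sum>d\<le>n div 2. of_int (c [n - b, b] [n - d, d]) * (\<Sum>j\<le>n. of_int (E n b j) * ?X j) * (\<Sum>k\<le>n. of_int (E n d k) * ?Y k))"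
    unfolding TRP_eq by (simp add: sum.reindex[OF inj] schur2E)
  also have "\<dots> = (\<Sum>b\<le>n div 2. \<Sum>d\<le>n div 2. \<Sum>j\<le>n. \<Sum>k\<le>n. of_int (c [n - b, b] [n - d, d]) * (of_int (E n b j) * ?X j) * (of_int (E n d k) * ?Y k))"
    by (simp only: prod3)
  also have "\<dots> = (\<Sum>j\<le>n. \<Sum>k\<le>n. \<Sum>b\<le>n div 2. \<Sum>d\<le>n div 2. of_int (c [n - b, b] [n - d, d]) * (of_int (E n b j) * ?X j) * (of_int (E n d k) * ?Y k))"
    by (rule swap4)
  also have "\<dots> = (\<Sum>j\<le>n. \<Sum>k\<le>n. of_int (CC n (\<lambda>b d. c [n - b, b] [n - d, d]) j k) * ?X j * ?Y k)"
    unfolding CC_def by (simp add: sum_distrib_left sum_distrib_right mult_ac)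
  finally show ?thesis .
qed

context
  fixes la :: "nat list"
  assumes len: "length la = 4" and pl: "part la"
begin

lemma prod_vars4:
  assumes T: "T \<in> ssyt la 4"
  shows "(\<Prod>c\<in>cells la. vars4 (x1*y1) (x1*y2) (x2*y1) (x2*y2) (T c))
       = (x1 ^ (sum_list la - bT la T) * x2 ^ bT la T) * (y1 ^ (sum_list la - dT la T) * y2 ^ dT la T)"
proof -
  have "(\<Prod>c\<in>cells la. vars4 (x1*y1) (x1*y2) (x2*y1) (x2*y2) (T c))
      = (\<Prod>c\<in>cells la. (if T c = 3 \<or> T c = 4 then x2 else x1) * (if T c = 2 \<or> T c = 4 then y2 else y1))"
  proof (rule prod.cong[OF refl])
    fix c assume "c \<in> cells la"
    then have "T c \<in> {1,2,3,4}" using ssyt_rng[OF T, of "fst c" "snd c"] by auto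
    then show "vars4 (x1*y1) (x1*y2) (x2*y1) (x2*y2) (T c) = (if T c = 3 \<or> T c = 4 then x2 else x1) * (if T c = 2 \<or> T c = 4 then y2 else y1)"
      by (auto simp: vars4_def)
  qed
  also have "\<dots> = x2 ^ bT la T * x1 ^ (sum_list la - bT la T) * (y2 ^ dT la T * y1 ^ (sum_list la - dT la T))"
    by (simp add: prod.distrib prod_if_pow finite_cells card_cells bT_def dT_def cnt_or[OF len pl T])
  finally show ?thesis by (simp add: mult_ac)
qed

lemma LHS_eq:
  "schur la 4 (vars4 (x1*y1) (x1*y2) (x2*y1) (x2*y2))
   = (\<Sum>j\<le>sum_list la. \<Sum>k\<le>sum_list la. of_nat (NN la j k) * (x1 ^ (sum_list la - j) * x2 ^ j) * (y1 ^ (sum_list la - k) * y2 ^ k))"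
proof -
  let ?n = "sum_list la"
  have "schur la 4 (vars4 (x1*y1) (x1*y2) (x2*y1) (x2*y2))
      = (\<Sum>T\<in>ssyt la 4. (\<lambda>j k. (x1 ^ (?n - j) * x2 ^ j) * (y1 ^ (?n - k) * y2 ^ k)) (bT la T) (dT la T))"
    unfolding schur_def by (rule sum.cong[OF refl]) (simp add: prod_vars4)
  also have "\<dots> = (\<Sum>j\<le>?n. \<Sum>k\<le>?n. of_nat (card {T\<in>ssyt la 4. bT la T = j \<and> dT la T = k}) * ((x1 ^ (?n - j) * x2 ^ j) * (y1 ^ (?n - k) * y2 ^ k)))"
    by (rule sum_group_pair) (auto simp: finite_ssyt bT_le[OF pl] dT_le[OF pl])
  finally show ?thesis by (simp add: NN_def mult.assoc)
qed

end


lemma len2: "length xs = 2 \<Longrightarrow> xs = [xs ! 0, xs ! 1]"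
  by (cases xs; cases "tl xs") auto

context
  fixes la :: "nat list"
  assumes len: "length la = 4" and pl: "part la"
begin

lemma exp_CC:
  assumes "kron_expansion la c" "j \<le> sum_list la" "k \<le> sum_list la"
  shows "CC (sum_list la) (\<lambda>b d. c [sum_list la - b, b] [sum_list la - d, d]) j k = int (NN la j k)"
proof -
  let ?n = "sum_list la"
  have "real (NN la j k) = real_of_int (CC ?n (\<lambda>b d. c [?n - b, b] [?n - d, d]) j k)"
  proof (rule coeff_unique[where n = ?n])
    fix x1 x2 y1 y2 :: real
    show "(\<Sum>j\<le>?n. \<Sum>k\<le>?n. real (NN la j k) * (x1^(?n-j) * x2^j) * (y1^(?n-k) * y2^k))
        = (\<Sum>j\<le>?n. \<Sum>k\<le>?n. real_of_int (CC ?n (\<lambda>b d. c [?n - b, b] [?n - d, d]) j k) * (x1^(?n-j) * x2^j) * (y1^(?n-k) * y2^k))"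
      using assms(1) unfolding kron_expansion_def
      by (simp only: LHS_eq[OF len pl, symmetric] RHS_eq[symmetric])
  qed (use assms in auto)
  then show ?thesis by linarith
qed

definition e0 :: "nat \<Rightarrow> nat \<Rightarrow> int" where
  "e0 = (\<lambda>b d. D1 (\<lambda>b. D1 (\<lambda>d. int (NN la b d)) d) b)"

definition c0 :: "nat list \<Rightarrow> nat list \<Rightarrow> int" where
  "c0 mu nu = (if mu \<in> two_row_parts (sum_list la) \<and> nu \<in> two_row_parts (sum_list la) then e0 (mu ! 1) (nu ! 1) else 0)"

lemma NN_min: "j \<le> sum_list la \<Longrightarrow> k \<le> sum_list la \<Longrightarrow>
   NN la (min j (sum_list la - j)) (min k (sum_list la - k)) = NN la j k"
proof -
  assume a: "j \<le> sum_list la" "k \<le> sum_list la"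
  have 1: "NN la (min j (sum_list la - j)) k' = NN la j k'" for k'
    by (cases "j \<le> sum_list la - j") (auto simp: min_def NN_sym1[OF pl a(1)])
  have 2: "NN la j' (min k (sum_list la - k)) = NN la j' k" for j'
    by (cases "k \<le> sum_list la - k") (auto simp: min_def NN_sym2[OF pl a(2)])
  show ?thesis using 1 2 by simp
qed

lemma c0_exp: "kron_expansion la c0"
proof -
  let ?n = "sum_list la"
  have CCe: "CC ?n (\<lambda>b d. c0 [?n - b, b] [?n - d, d]) j k = int (NN la j k)" if "j \<le> ?n" "k \<le> ?n" for j k
  proof -
    have "CC ?n (\<lambda>b d. c0 [?n - b, b] [?n - d, d]) j k = CC ?n e0 j k"
      by (rule CC_cong) (auto simp: c0_def TRP_eq)
    also have "\<dots> = int (NN la (min j (?n - j)) (min k (?n - k)))"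
      unfolding e0_def by (rule CC_tele[OF that])
    finally show ?thesis using NN_min[OF that] by simp
  qed
  have A: "schur la 4 (vars4 (x1 * y1) (x1 * y2) (x2 * y1) (x2 * y2)) =
    (\<Sum>mu\<in>two_row_parts ?n. \<Sum>nu\<in>two_row_parts ?n. of_int (c0 mu nu) * schur mu 2 (vars2 x1 x2) * schur nu 2 (vars2 y1 y2))"
    for x1 x2 y1 y2 :: real
    unfolding LHS_eq[OF len pl] RHS_eq by (intro sum.cong refl) (simp add: CCe)
  have B: "mu \<notin> two_row_parts ?n \<or> nu \<notin> two_row_parts ?n \<Longrightarrow> c0 mu nu = 0" for mu nu
    by (auto simp: c0_def)
  show ?thesis unfolding kron_expansion_def using A B by blast
qed

lemma exp_unique:
  assumes "kron_expansion la c1" "kron_expansion la c2"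
  shows "c1 = c2"
proof (intro ext)
  let ?n = "sum_list la"
  fix mu nu
  show "c1 mu nu = c2 mu nu"
  proof (cases "mu \<in> two_row_parts ?n \<and> nu \<in> two_row_parts ?n")
    case True
    then obtain b d where bd: "b \<le> ?n div 2" "d \<le> ?n div 2" "mu = [?n - b, b]" "nu = [?n - d, d]"
      unfolding TRP_eq by auto
    let ?R = "{(b,d). b \<le> ?n div 2 \<and> d \<le> ?n div 2}"
    have "(\<lambda>b d. c1 [?n - b, b] [?n - d, d] - c2 [?n - b, b] [?n - d, d]) b d = 0"
    proof (rule CC_inv[where R = ?R and n = ?n and e = "\<lambda>b d. c1 [?n - b, b] [?n - d, d] - c2 [?n - b, b] [?n - d, d]"])
      fix b d assume "(b,d) \<in> ?R"
      then have "b \<le> ?n" "d \<le> ?n" by auto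
      then show "CC ?n (\<lambda>b d. c1 [?n - b, b] [?n - d, d] - c2 [?n - b, b] [?n - d, d]) b d = 0"
        by (simp add: CC_diff exp_CC[OF assms(1)] exp_CC[OF assms(2)])
    qed (use bd in auto)
    then show ?thesis using bd by simp
  next
    case False
    have z1: "c1 mu nu = 0" using conjunct2[OF assms(1)[unfolded kron_expansion_def]] False by blast
    have z2: "c2 mu nu = 0" using conjunct2[OF assms(2)[unfolded kron_expansion_def]] False by blast
    show ?thesis using z1 z2 by simp
  qed
qed

lemma THE_exp: "kron_expansion la (THE c. kron_expansion la c)"
  by (rule theI[of _ c0]) (use c0_exp exp_unique in auto)

end

theorem proposition3p6:
  fixes la mu nu :: "nat list"
  assumes "length la = 4" and "length mu = 2" and "length nu = 2"
    and "is_partition la" and "is_partition mu" and "is_partition nu"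
    and "sum_list mu = sum_list la" and "sum_list nu = sum_list la"
    and "nu ! 1 < la ! 2 + la ! 3 \<or> mu ! 1 + nu ! 1 < la ! 1 + la ! 2 + 2 * la ! 3"
  shows "kronecker mu nu la = 0"
proof -
  let ?n = "sum_list la"
  have pl: "part la" using assms(4) by (rule is_partition_part)
  have mu: "mu = [mu ! 0, mu ! 1]" using assms(2) by (rule len2)
  have nu: "nu = [nu ! 0, nu ! 1]" using assms(3) by (rule len2)
  have mu1: "mu ! 1 \<le> mu ! 0"
  proof -
    have "sorted (rev [mu ! 0, mu ! 1])" using assms(5) mu unfolding is_partition_def by metis
    then show ?thesis by simp
  qed
  have nu1: "nu ! 1 \<le> nu ! 0"
  proof -
    have "sorted (rev [nu ! 0, nu ! 1])" using assms(6) nu unfolding is_partition_def by metis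
    then show ?thesis by simp
  qed
  have ms: "mu ! 0 + mu ! 1 = ?n"
  proof -
    have "sum_list [mu ! 0, mu ! 1] = ?n" using assms(7) mu by metis
    then show ?thesis by simp
  qed
  have ns: "nu ! 0 + nu ! 1 = ?n"
  proof -
    have "sum_list [nu ! 0, nu ! 1] = ?n" using assms(8) nu by metis
    then show ?thesis by simp
  qed
  define b where "b = mu ! 1"
  define d where "d = nu ! 1"
  have b2: "2 * b \<le> ?n" "mu ! 0 = ?n - b" using mu1 ms unfolding b_def by linarith+
  have d2: "2 * d \<le> ?n" "nu ! 0 = ?n - d" using nu1 ns unfolding d_def by linarith+
  have bd: "b \<le> ?n div 2" "d \<le> ?n div 2" "mu = [?n - b, b]" "nu = [?n - d, d]"
  proof -
    show "b \<le> ?n div 2" using b2(1) by linarith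
    show "d \<le> ?n div 2" using d2(1) by linarith
    show "mu = [?n - b, b]" using mu b2(2) unfolding b_def by metis
    show "nu = [?n - d, d]" using nu d2(2) unfolding d_def by metis
  qed
  define c where "c = (THE c. kron_expansion la c)"
  have ce: "kron_expansion la c" unfolding c_def by (rule THE_exp[OF assms(1) pl])
  let ?R = "{(b,d). b \<le> ?n div 2 \<and> d \<le> ?n div 2 \<and> (d < la ! 2 + la ! 3 \<or> b + d < la ! 1 + la ! 2 + 2 * la ! 3)}"
  have "(\<lambda>b d. c [?n - b, b] [?n - d, d]) b d = 0"
  proof (rule CC_inv[where R = ?R and n = ?n and e = "\<lambda>b d. c [?n - b, b] [?n - d, d]"])
    fix b d assume R: "(b,d) \<in> ?R"
    then have le: "b \<le> ?n" "d \<le> ?n" by auto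
    have emp: "{T\<in>ssyt la 4. bT la T = b \<and> dT la T = d} = {}"
      using R dT_bound[OF assms(1) pl] bdT_bound[OF assms(1) pl] by fastforce
    have "NN la b d = 0" unfolding NN_def emp by simp
    then show "CC ?n (\<lambda>b d. c [?n - b, b] [?n - d, d]) b d = 0"
      using exp_CC[OF assms(1) pl ce le] by simp
  next
    show "(b, d) \<in> ?R" using bd assms(9) unfolding b_def d_def by auto
  qed auto
  then show ?thesis using bd unfolding kronecker_def c_def by simp
qed


end
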